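(* Let $\{G_i\}$ be a family of connected graphs with common induced subgraph $J$, embedded as $J_i\subseteq G_i$, such that $\{(G_i|J_i)\}$ is isometric, and let $H=\amalg\{(G_i|J_i)\}$. If, for every $i$, every traversal $T_i$ for $\parallel(J_i:G_i)$ contains a local metric basis for $G_i$, then $\dim_l(H)=\sum_i\dim_l(G_i)$.
   Context: $d$ is shortest-path distance (in $H$ unless otherwise stated). A vertex $w$ distinguishes an edge $uv$ if $d(w,u)\neq d(w,v)$. A local metric basis of $G$ is a minimum-size set of vertices such that every edge of $G$ is distinguished (with distances in $G$) by one of them; $\dim_l(G)$ is its size. $J$ is a common induced subgraph of each $G_i$ via injective maps $\iota_i:V(J)\to V(G_i)$ with $\iota_i(x)\iota_i(y)\in E(G_i)$ iff $xy\in E(J)$; $J_i$ is the induced image, $x^i=\iota_i(x)$. $H=\amalg\{(G_i|J_i)\}$ is obtained from the disjoint union of the $G_i$ by identifying, for each $x\in V(J)$, all $x^i$ into one vertex; each $G_i$ is a subgraph of $H$. The family is isometric if $d_{G_i}(a^i,b^i)=d_{G_j}(a^j,b^j)$ for all $i,j$, $a,b\in V(J)$. $\parallel(J_i:G_i)$ is the set of edges $uv$ of $G_i-J_i$ with $d_{G_i}(w,u)=d_{G_i}(w,v)$ for all $w\in V(J_i)$. A traversal for $\parallel(J_i:G_i)$ is a minimum-size set $T_i\subseteq V(G_i-J_i)$ such that every edge of $\parallel(J_i:G_i)$ is distinguished (distances in $H$) by some vertex of $T_i$. *)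

theory Defs
  imports Main "HOL-Library.Extended_Nat"
begin

text \<open>A (finite simple) graph is a pair (V, E) with E a symmetric irreflexive
  relation on V; the edge uv is represented by the pairs (u,v) and (v,u).\<close>

type_synonym 'v graph = "'v set \<times> ('v \<times> 'v) set"

definition verts :: "'v graph \<Rightarrow> 'v set" where "verts G = fst G"
definition edges :: "'v graph \<Rightarrow> ('v \<times> 'v) set" where "edges G = snd G"

definition wf_graph :: "'v graph \<Rightarrow> bool" where
  "wf_graph G \<longleftrightarrow> finite (verts G) \<and> edges G \<subseteq> verts G \<times> verts G
     \<and> sym (edges G) \<and> irrefl (edges G)"

definition walk :: "'v graph \<Rightarrow> 'v list \<Rightarrow> bool" where
  "walk G xs \<longleftrightarrow> xs \<noteq> [] \<and> set xs \<subseteq> verts G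
     \<and> (\<forall>k. Suc k < length xs \<longrightarrow> (xs ! k, xs ! Suc k) \<in> edges G)"

text \<open>Shortest-path distance; \<infinity> if no walk exists.\<close>
definition dist :: "'v graph \<Rightarrow> 'v \<Rightarrow> 'v \<Rightarrow> enat" where
  "dist G u v = (INF xs \<in> {xs. walk G xs \<and> hd xs = u \<and> last xs = v}. enat (length xs - 1))"

definition connected_graph :: "'v graph \<Rightarrow> bool" where
  "connected_graph G \<longleftrightarrow> verts G \<noteq> {} \<and>
     (\<forall>u\<in>verts G. \<forall>v\<in>verts G. \<exists>xs. walk G xs \<and> hd xs = u \<and> last xs = v)"

definition edge_resolving :: "'v graph \<Rightarrow> 'v set \<Rightarrow> bool" where
  "edge_resolving G S \<longleftrightarrow> S \<subseteq> verts G \<and>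
     (\<forall>(u,v)\<in>edges G. \<exists>w\<in>S. dist G w u \<noteq> dist G w v)"

definition local_metric_basis :: "'v graph \<Rightarrow> 'v set \<Rightarrow> bool" where
  "local_metric_basis G S \<longleftrightarrow> edge_resolving G S \<and>
     (\<forall>S'. edge_resolving G S' \<longrightarrow> card S \<le> card S')"

definition local_dim :: "'v graph \<Rightarrow> nat" where
  "local_dim G = (LEAST k. \<exists>S. edge_resolving G S \<and> card S = k)"

text \<open>Amalgamation H of the family (G_i | J_i) over index set I, where J is the
  common induced subgraph and \<iota> i embeds J into G i.  Vertices of H:
  Inl x for x a vertex of J (all copies x^i identified), Inr (i,v) for a
  vertex v of G i outside J_i.  emb i maps G i into H.\<close>

definition emb :: "'j graph \<Rightarrow> ('i \<Rightarrow> 'j \<Rightarrow> 'v) \<Rightarrow> 'i \<Rightarrow> 'v \<Rightarrow> 'j + ('i \<times> 'v)" where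
  "emb J \<iota> i v = (if v \<in> \<iota> i ` verts J then Inl (inv_into (verts J) (\<iota> i) v) else Inr (i, v))"

definition amalg :: "'i set \<Rightarrow> ('i \<Rightarrow> 'v graph) \<Rightarrow> 'j graph \<Rightarrow> ('i \<Rightarrow> 'j \<Rightarrow> 'v)
    \<Rightarrow> ('j + ('i \<times> 'v)) graph" where
  "amalg I G J \<iota> = ((\<Union>i\<in>I. emb J \<iota> i ` verts (G i)),
     (\<Union>i\<in>I. (\<lambda>(u,v). (emb J \<iota> i u, emb J \<iota> i v)) ` edges (G i)))"

definition induced_embedding :: "'j graph \<Rightarrow> 'v graph \<Rightarrow> ('j \<Rightarrow> 'v) \<Rightarrow> bool" where
  "induced_embedding J G f \<longleftrightarrow> inj_on f (verts J) \<and> f ` verts J \<subseteq> verts G \<and>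
     (\<forall>x\<in>verts J. \<forall>y\<in>verts J. (f x, f y) \<in> edges G \<longleftrightarrow> (x, y) \<in> edges J)"

definition isometric_family :: "'i set \<Rightarrow> ('i \<Rightarrow> 'v graph) \<Rightarrow> 'j graph \<Rightarrow> ('i \<Rightarrow> 'j \<Rightarrow> 'v) \<Rightarrow> bool" where
  "isometric_family I G J \<iota> \<longleftrightarrow> (\<forall>i\<in>I. \<forall>k\<in>I. \<forall>a\<in>verts J. \<forall>b\<in>verts J.
      dist (G i) (\<iota> i a) (\<iota> i b) = dist (G k) (\<iota> k a) (\<iota> k b))"

definition parallel_edges :: "'v graph \<Rightarrow> 'v set \<Rightarrow> ('v \<times> 'v) set" where
  "parallel_edges Gi Ji = {(u,v) \<in> edges Gi. u \<notin> Ji \<and> v \<notin> Ji \<and>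
      (\<forall>w\<in>Ji. dist Gi w u = dist Gi w v)}"

definition par_resolving :: "'i set \<Rightarrow> ('i \<Rightarrow> 'v graph) \<Rightarrow> 'j graph \<Rightarrow> ('i \<Rightarrow> 'j \<Rightarrow> 'v)
    \<Rightarrow> 'i \<Rightarrow> 'v set \<Rightarrow> bool" where
  "par_resolving I G J \<iota> i T \<longleftrightarrow> T \<subseteq> verts (G i) - \<iota> i ` verts J \<and>
     (\<forall>(u,v)\<in>parallel_edges (G i) (\<iota> i ` verts J). \<exists>w\<in>T.
        dist (amalg I G J \<iota>) (emb J \<iota> i w) (emb J \<iota> i u) \<noteq>
        dist (amalg I G J \<iota>) (emb J \<iota> i w) (emb J \<iota> i v))"

definition traversal :: "'i set \<Rightarrow> ('i \<Rightarrow> 'v graph) \<Rightarrow> 'j graph \<Rightarrow> ('i \<Rightarrow> 'j \<Rightarrow> 'v)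
    \<Rightarrow> 'i \<Rightarrow> 'v set \<Rightarrow> bool" where
  "traversal I G J \<iota> i T \<longleftrightarrow> par_resolving I G J \<iota> i T \<and>
     (\<forall>T'. par_resolving I G J \<iota> i T' \<longrightarrow> card T \<le> card T')"

end

theory Submission
  imports Defs
begin

lemma Inf_enat_in: "(A::enat set) \<noteq> {} \<Longrightarrow> Inf A \<in> A"
  unfolding Inf_enat_def by (auto intro: LeastI)

lemma walk_single[simp]: "walk G [x] \<longleftrightarrow> x \<in> verts G"
  by (auto simp: walk_def)

lemma walk_Cons2: "walk G (x # y # xs) \<longleftrightarrow> x \<in> verts G \<and> (x,y) \<in> edges G \<and> walk G (y # xs)"
proof
  assume w: "walk G (x # y # xs)"
  then have all: "\<And>k. Suc k < length (x # y # xs) \<Longrightarrow> ((x # y # xs) ! k, (x # y # xs) ! Suc k) \<in> edges G"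
    and sv: "set (x # y # xs) \<subseteq> verts G" unfolding walk_def by blast+
  have "(x,y) \<in> edges G" using all[of 0] by simp
  moreover have "walk G (y # xs)" unfolding walk_def
  proof (intro conjI allI impI)
    show "set (y # xs) \<subseteq> verts G" using sv by simp
    fix k assume "Suc k < length (y # xs)"
    then show "((y # xs) ! k, (y # xs) ! Suc k) \<in> edges G" using all[of "Suc k"] by simp
  qed simp
  ultimately show "x \<in> verts G \<and> (x,y) \<in> edges G \<and> walk G (y # xs)" using sv by simp
next
  assume "x \<in> verts G \<and> (x,y) \<in> edges G \<and> walk G (y # xs)"
  then show "walk G (x # y # xs)" unfolding walk_def
    apply auto
    subgoal for k by (cases k) auto
    done
qed

lemma walk_append: "walk G xs \<Longrightarrow> walk G ys \<Longrightarrow> last xs = hd ys \<Longrightarrow> walk G (xs @ tl ys)"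
proof (induction xs rule: induct_list012)
  case 1 then show ?case by (simp add: walk_def)
next
  case (2 x) then show ?case by (cases ys) auto
next
  case (3 x y zs) then show ?case by (simp add: walk_Cons2)
qed

lemma dist_le_walk: "walk G xs \<Longrightarrow> hd xs = u \<Longrightarrow> last xs = v \<Longrightarrow> dist G u v \<le> enat (length xs - 1)"
  unfolding dist_def by (rule INF_lower) auto

lemma dist_attained: assumes "dist G u v \<noteq> \<infinity>"
  shows "\<exists>xs. walk G xs \<and> hd xs = u \<and> last xs = v \<and> dist G u v = enat (length xs - 1)"
proof -
  let ?W = "{xs. walk G xs \<and> hd xs = u \<and> last xs = v}"
  have "?W \<noteq> {}"
  proof
    assume "?W = {}"
    then have "dist G u v = \<infinity>" unfolding dist_def by (simp only: image_empty Inf_empty top_enat_def)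
    then show False using assms by simp
  qed
  then have "dist G u v \<in> (\<lambda>xs. enat (length xs - 1)) ` ?W"
    unfolding dist_def by (intro Inf_enat_in) auto
  then show ?thesis by auto
qed

lemma dist_self: "u \<in> verts G \<Longrightarrow> dist G u u = 0"
  using dist_le_walk[of G "[u]" u u] by (simp add: zero_enat_def[symmetric])

lemma dist_zero: assumes "dist G u v = 0" shows "u = v"
proof -
  obtain xs where "walk G xs" "hd xs = u" "last xs = v" "0 = enat (length xs - 1)"
    using dist_attained[of G u v] assms by (auto simp: zero_enat_def)
  then have "length xs - 1 = 0" by (metis zero_enat_def enat.inject)
  moreover have "xs \<noteq> []" using \<open>walk G xs\<close> by (simp add: walk_def)
  ultimately have "length xs = 1" by (cases xs) auto
  then obtain a where "xs = [a]" by (cases xs) auto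
  then show ?thesis using \<open>hd xs = u\<close> \<open>last xs = v\<close> by simp
qed

lemma dist_edge: "(u,v) \<in> edges G \<Longrightarrow> u \<in> verts G \<Longrightarrow> v \<in> verts G \<Longrightarrow> dist G u v \<le> 1"
  using dist_le_walk[of G "[u,v]" u v] by (simp add: walk_Cons2 one_enat_def)

lemma dist_triangle: "dist G u w \<le> dist G u v + dist G v w"
proof (cases "dist G u v = \<infinity> \<or> dist G v w = \<infinity>")
  case True then show ?thesis by auto
next
  case False
  then obtain xs ys where xs: "walk G xs" "hd xs = u" "last xs = v" "dist G u v = enat (length xs - 1)"
    and ys: "walk G ys" "hd ys = v" "last ys = w" "dist G v w = enat (length ys - 1)"
    using dist_attained by metis
  have ne: "xs \<noteq> []" "ys \<noteq> []" using xs ys by (auto simp: walk_def)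
  have w: "walk G (xs @ tl ys)" using walk_append[OF xs(1) ys(1)] xs(3) ys(2) by simp
  have h: "hd (xs @ tl ys) = u" using ne xs by simp
  have l: "last (xs @ tl ys) = w" using ne xs ys by (cases ys) (auto split: list.splits)
  have "dist G u w \<le> enat (length (xs @ tl ys) - 1)" using dist_le_walk[OF w h l] .
  also have "\<dots> = dist G u v + dist G v w" using xs ys ne by (cases xs; cases ys) auto
  finally show ?thesis .
qed

lemma walk_lip:
  assumes "walk G xs" "\<And>y y'. (y,y') \<in> edges G \<Longrightarrow> (f y' :: enat) \<le> f y + 1"
  shows "f (last xs) \<le> f (hd xs) + enat (length xs - 1)"
  using assms(1)
proof (induction xs rule: induct_list012)
  case 1 then show ?case by (simp add: walk_def)
next
  case (2 x) then show ?case by simp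
next
  case (3 x y zs)
  then have e: "(x,y) \<in> edges G" and w: "walk G (y # zs)" by (auto simp: walk_Cons2)
  have "f (last (y # zs)) \<le> f y + enat (length (y#zs) - 1)" using 3 w by simp
  also have "\<dots> \<le> f x + 1 + enat (length zs)" using assms(2)[OF e] by (simp add: add_right_mono)
  also have "\<dots> = f x + enat (length (x # y # zs) - 1)" by (simp add: one_enat_def add.assoc)
  finally show ?case by simp
qed

locale AM =
  fixes I :: "'i set" and G :: "'i \<Rightarrow> 'v graph" and J :: "'j graph" and \<iota> :: "'i \<Rightarrow> 'j \<Rightarrow> 'v"
  assumes finI: "finite I" and wfJ: "wf_graph J"
    and wfG: "\<And>i. i \<in> I \<Longrightarrow> wf_graph (G i)"
    and ind: "\<And>i. i \<in> I \<Longrightarrow> induced_embedding J (G i) (\<iota> i)"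
    and iso: "isometric_family I G J \<iota>"
begin

abbreviation "H \<equiv> amalg I G J \<iota>"
abbreviation "e \<equiv> emb J \<iota>"

lemma inj: "i \<in> I \<Longrightarrow> inj_on (\<iota> i) (verts J)" using ind by (simp add: induced_embedding_def)
lemma iota_in: "i \<in> I \<Longrightarrow> x \<in> verts J \<Longrightarrow> \<iota> i x \<in> verts (G i)"
  using ind by (auto simp: induced_embedding_def)

lemma emb_J: "i \<in> I \<Longrightarrow> x \<in> verts J \<Longrightarrow> e i (\<iota> i x) = Inl x"
  using inj by (auto simp: emb_def)
lemma emb_notJ: "v \<notin> \<iota> i ` verts J \<Longrightarrow> e i v = Inr (i,v)"
  by (simp add: emb_def)

lemma edge_verts: "i \<in> I \<Longrightarrow> (u,v) \<in> edges (G i) \<Longrightarrow> u \<in> verts (G i) \<and> v \<in> verts (G i)"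
  using wfG by (auto simp: wf_graph_def)

lemma vertsH: "y \<in> verts H \<longleftrightarrow> (\<exists>i\<in>I. \<exists>v\<in>verts (G i). y = e i v)"
  by (auto simp: amalg_def verts_def)
lemma edgesH: "(y,y') \<in> edges H \<longleftrightarrow> (\<exists>i\<in>I. \<exists>u v. (u,v) \<in> edges (G i) \<and> y = e i u \<and> y' = e i v)"
  by (auto simp: amalg_def edges_def)

lemma finite_vertsH: "finite (verts H)"
proof -
  have "verts H = (\<Union>i\<in>I. e i ` verts (G i))" by (auto simp: amalg_def verts_def)
  then show ?thesis using finI wfG by (auto simp: wf_graph_def)
qed

lemma walk_emb: assumes "i \<in> I" "walk (G i) xs" shows "walk H (map (e i) xs)"
  using assms unfolding walk_def edgesH by (auto 0 4 simp: vertsH)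

lemma dist_H_le: assumes "i \<in> I" shows "dist H (e i a) (e i b) \<le> dist (G i) a b"
proof (cases "dist (G i) a b = \<infinity>")
  case False
  then obtain xs where xs: "walk (G i) xs" "hd xs = a" "last xs = b" "dist (G i) a b = enat (length xs - 1)"
    using dist_attained by metis
  have ne: "xs \<noteq> []" using xs by (auto simp: walk_def)
  show ?thesis using dist_le_walk[OF walk_emb[OF assms xs(1)], of "e i a" "e i b"] xs ne
    by (simp add: hd_map last_map)
qed simp

definition psi :: "'i \<Rightarrow> 'v \<Rightarrow> 'i \<Rightarrow> 'v \<Rightarrow> enat" where
  "psi k a j v = (INF x\<in>verts J. dist (G k) a (\<iota> k x) + dist (G j) (\<iota> j x) v)"

definition phi :: "'i \<Rightarrow> 'v \<Rightarrow> 'j + 'i \<times> 'v \<Rightarrow> enat" where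
  "phi k a y = (case y of Inl x \<Rightarrow> dist (G k) a (\<iota> k x)
     | Inr (j,v) \<Rightarrow> if j = k then dist (G k) a v else psi k a j v)"

lemma psi_J: assumes "k \<in> I" "j \<in> I" "x0 \<in> verts J"
  shows "psi k a j (\<iota> j x0) = dist (G k) a (\<iota> k x0)"
proof (rule antisym)
  have "psi k a j (\<iota> j x0) \<le> dist (G k) a (\<iota> k x0) + dist (G j) (\<iota> j x0) (\<iota> j x0)"
    unfolding psi_def using assms(3) by (rule INF_lower)
  moreover have "dist (G j) (\<iota> j x0) (\<iota> j x0) = 0" by (rule dist_self[OF iota_in[OF assms(2,3)]])
  ultimately show "psi k a j (\<iota> j x0) \<le> dist (G k) a (\<iota> k x0)" by simp
  show "dist (G k) a (\<iota> k x0) \<le> psi k a j (\<iota> j x0)"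
    unfolding psi_def
  proof (rule INF_greatest)
    fix x assume "x \<in> verts J"
    then have eq: "dist (G j) (\<iota> j x) (\<iota> j x0) = dist (G k) (\<iota> k x) (\<iota> k x0)"
      using iso assms unfolding isometric_family_def by blast
    have "dist (G k) a (\<iota> k x0) \<le> dist (G k) a (\<iota> k x) + dist (G k) (\<iota> k x) (\<iota> k x0)"
      by (rule dist_triangle)
    then show "dist (G k) a (\<iota> k x0) \<le> dist (G k) a (\<iota> k x) + dist (G j) (\<iota> j x) (\<iota> j x0)"
      by (simp only: eq)
  qed
qed

lemma phi_emb: assumes "k \<in> I" "j \<in> I" "y \<in> verts (G j)"
  shows "phi k a (e j y) = (if j = k then dist (G k) a y else psi k a j y)"
proof (cases "y \<in> \<iota> j ` verts J")
  case True
  then obtain x0 where x0: "x0 \<in> verts J" "y = \<iota> j x0" by blast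
  have "e j y = Inl x0" using emb_J[OF assms(2) x0(1)] x0(2) by simp
  then have ph: "phi k a (e j y) = dist (G k) a (\<iota> k x0)" by (simp add: phi_def)
  show ?thesis
  proof (cases "j = k")
    case True then show ?thesis using ph x0(2) by simp
  next
    case False then show ?thesis using ph x0(2) psi_J[OF assms(1,2) x0(1)] by simp
  qed
next
  case False
  then have "e j y = Inr (j,y)" by (rule emb_notJ)
  then show ?thesis by (simp add: phi_def)
qed

lemma psi_step: assumes "j \<in> I" "(u,v) \<in> edges (G j)"
  shows "psi k a j v \<le> psi k a j u + 1"
proof (cases "verts J = {}")
  case True
  have "psi k a j v = \<infinity>" unfolding psi_def True by (simp only: image_empty Inf_empty top_enat_def)
  moreover have "psi k a j u = \<infinity>" unfolding psi_def True by (simp only: image_empty Inf_empty top_enat_def)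
  ultimately show ?thesis by simp
next
  case False
  then have "psi k a j u \<in> (\<lambda>x. dist (G k) a (\<iota> k x) + dist (G j) (\<iota> j x) u) ` verts J"
    unfolding psi_def by (intro Inf_enat_in) simp
  then obtain x0 where x0: "x0 \<in> verts J" "psi k a j u = dist (G k) a (\<iota> k x0) + dist (G j) (\<iota> j x0) u"
    by (rule imageE) (simp only:)
  have uv: "u \<in> verts (G j)" "v \<in> verts (G j)" using edge_verts[OF assms] by simp_all
  have d1: "dist (G j) u v \<le> 1" by (rule dist_edge[OF assms(2) uv])
  have "psi k a j v \<le> dist (G k) a (\<iota> k x0) + dist (G j) (\<iota> j x0) v"
    unfolding psi_def using x0(1) by (rule INF_lower)
  also have "\<dots> \<le> dist (G k) a (\<iota> k x0) + (dist (G j) (\<iota> j x0) u + dist (G j) u v)"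
    by (intro add_left_mono dist_triangle)
  also have "\<dots> \<le> dist (G k) a (\<iota> k x0) + (dist (G j) (\<iota> j x0) u + 1)"
    using d1 by (intro add_left_mono)
  also have "\<dots> = psi k a j u + 1" using x0(2) by (simp add: add.assoc)
  finally show ?thesis .
qed

lemma phi_lip: assumes "k \<in> I" "(y,y') \<in> edges H" shows "phi k a y' \<le> phi k a y + 1"
proof -
  obtain j u v where j: "j \<in> I" "(u,v) \<in> edges (G j)" "y = e j u" "y' = e j v"
    using assms(2) edgesH by blast
  have uv: "u \<in> verts (G j)" "v \<in> verts (G j)" using edge_verts j by auto
  show ?thesis
  proof (cases "j = k")
    case True
    have "dist (G k) a v \<le> dist (G k) a u + dist (G k) u v" by (rule dist_triangle)
    also have "\<dots> \<le> dist (G k) a u + 1"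
    proof -
      have "dist (G k) u v \<le> 1" using dist_edge[OF _ uv] j True by simp
      then show ?thesis by (rule add_left_mono)
    qed
    finally show ?thesis using j uv True phi_emb[OF assms(1) j(1)] by simp
  next
    case False
    then show ?thesis using j uv phi_emb[OF assms(1) j(1)] psi_step[OF j(1,2)] by simp
  qed
qed

lemma phi_le_dist: assumes "k \<in> I" "a \<in> verts (G k)" shows "phi k a y \<le> dist H (e k a) y"
  unfolding dist_def
proof (rule INF_greatest)
  fix xs assume "xs \<in> {xs. walk H xs \<and> hd xs = e k a \<and> last xs = y}"
  then have xs: "walk H xs" "hd xs = e k a" "last xs = y" by auto
  have "phi k a (last xs) \<le> phi k a (hd xs) + enat (length xs - 1)"
    using walk_lip[OF xs(1), of "phi k a"] phi_lip[OF assms(1)] by blast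
  moreover have "phi k a (hd xs) = 0" using xs(2) phi_emb[OF assms(1) assms(1,2)] dist_self[OF assms(2)] by simp
  ultimately show "phi k a y \<le> enat (length xs - 1)" using xs by simp
qed

lemma isom: assumes "i \<in> I" "a \<in> verts (G i)" "b \<in> verts (G i)"
  shows "dist H (e i a) (e i b) = dist (G i) a b"
  using dist_H_le[OF assms(1)] phi_le_dist[OF assms(1,2), of "e i b"] phi_emb[OF assms(1,1,3), of a]
  by (simp add: antisym)

lemma cross: assumes "i \<in> I" "k \<in> I" "k \<noteq> i" "w \<in> verts (G k)" "u \<in> verts (G i)"
  shows "dist H (e k w) (e i u) = psi k w i u"
proof (rule antisym)
  show "psi k w i u \<le> dist H (e k w) (e i u)"
    using phi_le_dist[OF assms(2,4), of "e i u"] phi_emb[OF assms(2,1,5), of w] assms(3) by simp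
  show "dist H (e k w) (e i u) \<le> psi k w i u"
    unfolding psi_def
  proof (rule INF_greatest)
    fix x assume x: "x \<in> verts J"
    have "dist H (e k w) (e i u) \<le> dist H (e k w) (Inl x) + dist H (Inl x) (e i u)" by (rule dist_triangle)
    also have "\<dots> = dist (G k) w (\<iota> k x) + dist (G i) (\<iota> i x) u"
      using isom[OF assms(2,4) iota_in[OF assms(2) x]] isom[OF assms(1) iota_in[OF assms(1) x] assms(5)]
        emb_J[OF assms(1) x] emb_J[OF assms(2) x] by simp
    finally show "dist H (e k w) (e i u) \<le> dist (G k) w (\<iota> k x) + dist (G i) (\<iota> i x) u" .
  qed
qed

lemma lmb_card: "local_metric_basis K B \<Longrightarrow> local_dim K = card B"
  unfolding local_dim_def local_metric_basis_def
  by (rule Least_equality) auto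

lemma par_exists: assumes "i \<in> I" shows "\<exists>T. traversal I G J \<iota> i T"
proof -
  have "par_resolving I G J \<iota> i (verts (G i) - \<iota> i ` verts J)"
    unfolding par_resolving_def
  proof (intro conjI ballI, simp, clarify)
    fix u v assume uv: "(u,v) \<in> parallel_edges (G i) (\<iota> i ` verts J)"
    then have e: "(u,v) \<in> edges (G i)" and u: "u \<notin> \<iota> i ` verts J" by (auto simp: parallel_edges_def)
    have vu: "u \<in> verts (G i)" "v \<in> verts (G i)" using edge_verts[OF assms e] by auto
    have "u \<noteq> v" using wfG[OF assms] e by (auto simp: wf_graph_def irrefl_def)
    then have "dist H (e i u) (e i u) \<noteq> dist H (e i u) (e i v)"
      using isom[OF assms vu(1) vu(1)] isom[OF assms vu] dist_self[OF vu(1)] dist_zero by metis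
    then show "\<exists>w\<in>verts (G i) - \<iota> i ` verts J. dist H (e i w) (e i u) \<noteq> dist H (e i w) (e i v)"
      using vu u by blast
  qed
  note P = this
  have "\<exists>T. par_resolving I G J \<iota> i T \<and> (\<forall>T'. par_resolving I G J \<iota> i T' \<longrightarrow> card T \<le> card T')"
    by (rule ex_has_least_nat[of "par_resolving I G J \<iota> i" "verts (G i) - \<iota> i ` verts J" card, OF P])
  then show ?thesis unfolding traversal_def .
qed

theorem main:
  assumes hyp: "\<And>i T. i \<in> I \<Longrightarrow> traversal I G J \<iota> i T \<Longrightarrow> \<exists>B\<subseteq>T. local_metric_basis (G i) B"
  shows "local_dim H = (\<Sum>i\<in>I. local_dim (G i))"
proof -
  define T where "T i = (SOME T. traversal I G J \<iota> i T)" for i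
  have T: "traversal I G J \<iota> i (T i)" if "i \<in> I" for i
    unfolding T_def using par_exists[OF that] by (rule someI_ex)
  define B where "B i = (SOME B. B \<subseteq> T i \<and> local_metric_basis (G i) B)" for i
  have B: "B i \<subseteq> T i \<and> local_metric_basis (G i) (B i)" if "i \<in> I" for i
    unfolding B_def using hyp[OF that T[OF that]] by (rule someI_ex)
  have Bv: "B i \<subseteq> verts (G i)" if "i \<in> I" for i
    using B[OF that] by (auto simp: local_metric_basis_def edge_resolving_def)
  have finB: "finite (B i)" if "i \<in> I" for i
    using Bv[OF that] wfG[OF that] finite_subset by (auto simp: wf_graph_def)
  have cardB: "local_dim (G i) = card (B i)" if "i \<in> I" for i using B[OF that] lmb_card by blast
  define S0 where "S0 = (\<Union>i\<in>I. e i ` B i)"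
  have S0res: "edge_resolving H S0"
    unfolding edge_resolving_def
  proof (intro conjI ballI)
    show "S0 \<subseteq> verts H"
    proof
      fix y assume "y \<in> S0"
      then obtain i v where "i \<in> I" "v \<in> B i" "y = e i v" unfolding S0_def by blast
      then show "y \<in> verts H" using Bv vertsH by blast
    qed
  next
    fix p assume "p \<in> edges H"
    then obtain j u v where j: "j \<in> I" "(u,v) \<in> edges (G j)" "p = (e j u, e j v)"
      using edgesH by (cases p) blast
    obtain w where w: "w \<in> B j" "dist (G j) w u \<noteq> dist (G j) w v"
      using B[OF j(1)] j(2) by (auto simp: local_metric_basis_def edge_resolving_def)
    have "dist H (e j w) (e j u) \<noteq> dist H (e j w) (e j v)"
      using w isom[OF j(1)] Bv[OF j(1)] edge_verts[OF j(1,2)] by auto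
    moreover have "e j w \<in> S0" using w j unfolding S0_def by auto
    ultimately show "case p of (u, v) \<Rightarrow> \<exists>w\<in>S0. dist H w u \<noteq> dist H w v" using j by auto
  qed
  have S0card: "card S0 \<le> (\<Sum>i\<in>I. local_dim (G i))"
  proof -
    have "card S0 \<le> (\<Sum>i\<in>I. card (e i ` B i))" unfolding S0_def using finI by (rule card_UN_le)
    also have "\<dots> \<le> (\<Sum>i\<in>I. card (B i))" by (intro sum_mono card_image_le finB)
    finally show ?thesis using cardB by simp
  qed
  have lower: "(\<Sum>i\<in>I. local_dim (G i)) \<le> card S" if S: "edge_resolving H S" for S
  proof -
    have SH: "S \<subseteq> verts H" using S by (simp add: edge_resolving_def)
    have finS: "finite S" using finite_subset[OF SH finite_vertsH] .
    define U where "U i = {v. Inr (i,v) \<in> S \<and> v \<in> verts (G i) \<and> v \<notin> \<iota> i ` verts J}" for i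
    have Upar: "par_resolving I G J \<iota> i (U i)" if i: "i \<in> I" for i
      unfolding par_resolving_def
    proof (intro conjI ballI)
      show "U i \<subseteq> verts (G i) - \<iota> i ` verts J" by (auto simp: U_def)
    next
      fix p assume "p \<in> parallel_edges (G i) (\<iota> i ` verts J)"
      then obtain u v where p: "p = (u,v)" "(u,v) \<in> edges (G i)" "u \<notin> \<iota> i ` verts J" "v \<notin> \<iota> i ` verts J"
        and par: "\<And>x. x \<in> verts J \<Longrightarrow> dist (G i) (\<iota> i x) u = dist (G i) (\<iota> i x) v"
        by (cases p) (auto simp: parallel_edges_def)
      have uv: "u \<in> verts (G i)" "v \<in> verts (G i)" using edge_verts[OF i p(2)] by auto
      have "(e i u, e i v) \<in> edges H" using edgesH i p(2) by blast
      then obtain w where w: "w \<in> S" "dist H w (e i u) \<noteq> dist H w (e i v)"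
        using S by (fastforce simp: edge_resolving_def)
      obtain k w' where k: "k \<in> I" "w' \<in> verts (G k)" "w = e k w'" using w(1) SH vertsH by blast
      show "case p of (u, v) \<Rightarrow> \<exists>w\<in>U i. dist H (e i w) (e i u) \<noteq> dist H (e i w) (e i v)"
      proof (cases "w' \<in> \<iota> k ` verts J")
        case True
        then obtain x where x: "x \<in> verts J" "w' = \<iota> k x" by auto
        have "w = e i (\<iota> i x)" using k x emb_J i by simp
        then have False using w isom[OF i iota_in[OF i x(1)]] uv par[OF x(1)] by simp
        then show ?thesis ..
      next
        case False
        then have wI: "w = Inr (k, w')" using k emb_notJ by simp
        show ?thesis
        proof (cases "k = i")
          case True
          then have "w' \<in> U i" using wI w k False by (simp add: U_def)
          moreover have "e i w' = w" using wI True False emb_notJ by simp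
          ultimately show ?thesis using w p by auto
        next
          case ki: False
          have "psi k w' i u = psi k w' i v" unfolding psi_def using par by simp
          then have False using w k cross[OF i k(1) ki k(2) uv(1)] cross[OF i k(1) ki k(2) uv(2)] by simp
          then show ?thesis ..
        qed
      qed
    qed
    have "(\<Sum>i\<in>I. local_dim (G i)) \<le> (\<Sum>i\<in>I. card (U i))"
    proof (rule sum_mono)
      fix i assume i: "i \<in> I"
      have "card (B i) \<le> card (T i)"
      proof (rule card_mono)
        have "T i \<subseteq> verts (G i)" using T[OF i] by (auto simp: traversal_def par_resolving_def)
        then show "finite (T i)" using wfG[OF i] finite_subset by (auto simp: wf_graph_def)
        show "B i \<subseteq> T i" using B[OF i] by simp
      qed
      also have "\<dots> \<le> card (U i)" using T[OF i] Upar[OF i] by (auto simp: traversal_def)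
      finally show "local_dim (G i) \<le> card (U i)" using cardB[OF i] by simp
    qed
    also have "\<dots> = (\<Sum>i\<in>I. card ((\<lambda>v. Inr (i,v) :: 'j + 'i \<times> 'v) ` U i))"
      by (intro sum.cong refl card_image[symmetric]) (auto simp: inj_on_def)
    also have "\<dots> = card (\<Union>i\<in>I. (\<lambda>v. Inr (i,v) :: 'j + 'i \<times> 'v) ` U i)"
    proof (rule card_UN_disjoint[symmetric])
      show "finite I" by (rule finI)
      show "\<forall>i\<in>I. finite ((\<lambda>v. Inr (i,v) :: 'j + 'i \<times> 'v) ` U i)"
      proof
        fix i assume "i \<in> I"
        have "(\<lambda>v. Inr (i,v) :: 'j + 'i \<times> 'v) ` U i \<subseteq> S" by (auto simp: U_def)
        then show "finite ((\<lambda>v. Inr (i,v) :: 'j + 'i \<times> 'v) ` U i)" using finS finite_subset by blast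
      qed
      show "\<forall>i\<in>I. \<forall>j\<in>I. i \<noteq> j \<longrightarrow> (\<lambda>v. Inr (i,v) :: 'j + 'i \<times> 'v) ` U i \<inter> (\<lambda>v. Inr (j,v) :: 'j + 'i \<times> 'v) ` U j = {}" by auto
    qed
    also have "\<dots> \<le> card S" using finS by (intro card_mono) (auto simp: U_def)
    finally show ?thesis .
  qed
  have eq: "card S0 = (\<Sum>i\<in>I. local_dim (G i))" using S0card lower[OF S0res] by simp
  show ?thesis unfolding local_dim_def[of H]
    by (rule Least_equality) (use S0res eq lower in auto)
qed

end

theorem lemma7:
  fixes I :: "'i set" and G :: "'i \<Rightarrow> 'v graph" and J :: "'j graph"
    and \<iota> :: "'i \<Rightarrow> 'j \<Rightarrow> 'v"
  assumes "finite I"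
    and "wf_graph J"
    and "\<And>i. i \<in> I \<Longrightarrow> wf_graph (G i)"
    and "\<And>i. i \<in> I \<Longrightarrow> connected_graph (G i)"
    and "\<And>i. i \<in> I \<Longrightarrow> induced_embedding J (G i) (\<iota> i)"
    and "isometric_family I G J \<iota>"
    and "\<And>i T. i \<in> I \<Longrightarrow> traversal I G J \<iota> i T \<Longrightarrow>
           \<exists>B\<subseteq>T. local_metric_basis (G i) B"
  shows "local_dim (amalg I G J \<iota>) = (\<Sum>i\<in>I. local_dim (G i))"
proof -
  interpret AM I G J \<iota>
    by (rule AM.intro) (fact assms(1), fact assms(2), fact assms(3), fact assms(5), fact assms(6))
  show ?thesis by (rule main) (rule assms(7))
qed

end
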